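(* Let $G=GL(\infty,F_2)\ltimes F_2^\infty$. The only normal subgroups of $G$ are $\{e\}$, $F_2^\infty$ and $G$.
   Context: $F_2$ is the field with two elements and $F_2^\infty=\bigoplus_{\mathbb N}F_2$ is the space of finitely supported column vectors (standard basis $e_1,e_2,\dots$), regarded as an abelian group under addition. $GL(\infty,F_2)$ is the group of invertible $\mathbb N\times\mathbb N$ matrices $M$ over $F_2$ with $M_{ij}\neq\delta_{ij}$ for only finitely many $(i,j)$, acting on $F_2^\infty$ by matrix multiplication. $G=GL(\infty,F_2)\ltimes F_2^\infty$ is the semidirect product with $gvg^{-1}=g(v)$ (this group is isomorphic to $\mathrm{Aut}_{\mathrm{fin}}(\mathbb Z_2^\infty)\ltimes\mathbb Z_2^\infty$). *)

theory Defs
  imports "HOL-Algebra.Coset" "HOL-Library.Z2"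
begin

type_synonym vec2 = "nat \<Rightarrow> bit"
type_synonym mat2 = "nat \<Rightarrow> nat \<Rightarrow> bit"

definition fin_vecs :: "vec2 set" where
  "fin_vecs = {v. finite {i. v i \<noteq> 0}}"

definition id_mat :: mat2 where
  "id_mat = (\<lambda>i j. if i = j then 1 else 0)"

definition fin_mats :: "mat2 set" where
  "fin_mats = {M. finite {(i, j). M i j \<noteq> id_mat i j}}"

text \<open>Products: the sums are over the (finite, for the matrices considered) set of
  indices contributing a nonzero term.\<close>
definition mat_mult :: "mat2 \<Rightarrow> mat2 \<Rightarrow> mat2" where
  "mat_mult M N = (\<lambda>i j. \<Sum>k\<in>{k. M i k \<noteq> 0 \<and> N k j \<noteq> 0}. M i k * N k j)"

definition mat_vec :: "mat2 \<Rightarrow> vec2 \<Rightarrow> vec2" where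
  "mat_vec M v = (\<lambda>i. \<Sum>k\<in>{k. M i k \<noteq> 0 \<and> v k \<noteq> 0}. M i k * v k)"

definition GL_inf :: "mat2 set" where
  "GL_inf = {M \<in> fin_mats. \<exists>N \<in> fin_mats. mat_mult M N = id_mat \<and> mat_mult N M = id_mat}"

text \<open>The semidirect product GL(infinity,F_2) \<ltimes> F_2^infinity, with g v g^{-1} = g(v):
  the pair (g, v) stands for the element v g, so (g,v)(h,w) = (gh, v + g(w)).\<close>
definition G_semidirect :: "(mat2 \<times> vec2) monoid" where
  "G_semidirect = \<lparr> carrier = GL_inf \<times> fin_vecs,
     mult = (\<lambda>(g, v) (h, w). (mat_mult g h, \<lambda>i. v i + mat_vec g w i)),
     one = (id_mat, \<lambda>i. 0) \<rparr>"

definition transl_subgroup :: "(mat2 \<times> vec2) set" where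
  "transl_subgroup = {(id_mat, v) | v. v \<in> fin_vecs}"

end

theory Submission
  imports Defs
begin


declare add_bit_eq_xor[simp del] mult_bit_eq_and[simp del]

lemma bit_add_self[simp]: "(a::bit) + a = 0"
  by (cases a) simp_all

lemma bit_cases_mult: "(a::bit) * b \<noteq> 0 \<longleftrightarrow> a \<noteq> 0 \<and> b \<noteq> 0"
  by simp

definition dot :: "vec2 \<Rightarrow> vec2 \<Rightarrow> bit" where
  "dot a b = (\<Sum>k\<in>{k. a k \<noteq> 0 \<and> b k \<noteq> 0}. a k * b k)"

definition ev :: "nat \<Rightarrow> vec2" where
  "ev p = (\<lambda>k. if k = p then 1 else 0)"

definition rowfin :: "mat2 \<Rightarrow> bool" where
  "rowfin M = (\<forall>i. finite {k. M i k \<noteq> 0})"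

definition bnd :: "nat \<Rightarrow> mat2 \<Rightarrow> bool" where
  "bnd n M = (\<forall>i j. (n \<le> i \<or> n \<le> j) \<longrightarrow> M i j = id_mat i j)"

lemma mat_vec_dot: "mat_vec M v i = dot (M i) v"
  by (simp add: mat_vec_def dot_def)

lemma mat_mult_dot: "mat_mult M N i j = dot (M i) (\<lambda>k. N k j)"
  by (simp add: mat_mult_def dot_def)

lemma mat_mult_vec: "mat_mult M N i j = mat_vec M (\<lambda>k. N k j) i"
  by (simp add: mat_mult_def mat_vec_def)

lemma dot_sum:
  assumes "finite R" "{k. a k \<noteq> 0 \<and> b k \<noteq> 0} \<subseteq> R"
  shows "dot a b = (\<Sum>k\<in>R. a k * b k)"
  unfolding dot_def
  by (rule sum.mono_neutral_left[OF assms]) auto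

lemma dot_sumL:
  assumes "finite R" "{k. a k \<noteq> 0} \<subseteq> R"
  shows "dot a b = (\<Sum>k\<in>R. a k * b k)"
  using assms by (intro dot_sum) auto

lemma dot_sumR:
  assumes "finite R" "{k. b k \<noteq> 0} \<subseteq> R"
  shows "dot a b = (\<Sum>k\<in>R. a k * b k)"
  using assms by (intro dot_sum) auto

lemma dot_comm: "dot a b = dot b a"
  unfolding dot_def by (simp add: conj_commute mult.commute)

lemma dot_add_right:
  assumes "finite {k. a k \<noteq> 0}"
  shows "dot a (\<lambda>k. b k + c k) = dot a b + dot a c"
  using assms
  by (simp add: dot_sumL[OF assms] sum.distrib distrib_left)

lemma dot_add_left:
  assumes "finite {k. a k \<noteq> 0}" "finite {k. b k \<noteq> 0}"
  shows "dot (\<lambda>k. a k + b k) c = dot a c + dot b c"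
proof -
  let ?R = "{k. a k \<noteq> 0} \<union> {k. b k \<noteq> 0}"
  have f: "finite ?R" using assms by simp
  have "dot (\<lambda>k. a k + b k) c = (\<Sum>k\<in>?R. (a k + b k) * c k)"
    by (rule dot_sumL[OF f]) auto
  also have "\<dots> = (\<Sum>k\<in>?R. a k * c k) + (\<Sum>k\<in>?R. b k * c k)"
    by (simp add: sum.distrib distrib_right)
  also have "\<dots> = dot a c + dot b c"
    by (subst (1 2) dot_sumL[OF f]) auto
  finally show ?thesis .
qed

lemma dot_scal_right: "dot a (\<lambda>k. c * b k) = c * dot a b"
  by (cases c) (simp_all add: dot_def)

lemma dot_scal_left: "dot (\<lambda>k. c * a k) b = c * dot a b"
  by (cases c) (simp_all add: dot_def)

lemma dot_ev_left[simp]: "dot (ev p) v = v p"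
  by (subst dot_sumL[of "{p}"]) (auto simp: ev_def)

lemma dot_ev_right[simp]: "dot v (ev p) = v p"
  by (subst dot_sumR[of "{p}"]) (auto simp: ev_def)

lemma dot_zero_right[simp]: "dot a (\<lambda>_. 0) = 0"
  by (simp add: dot_def)

lemma dot_zero_left[simp]: "dot (\<lambda>_. 0) a = 0"
  by (simp add: dot_def)

lemma id_row[simp]: "id_mat i = ev i"
  by (auto simp: id_mat_def ev_def)

lemma id_col[simp]: "(\<lambda>k. id_mat k j) = ev j"
  by (auto simp: id_mat_def ev_def)

lemma ev_col[simp]: "(\<lambda>k. ev k j) = ev j"
  by (auto simp: ev_def)

lemma mat_vec_id[simp]: "mat_vec id_mat v = v"
  by (rule ext) (simp add: mat_vec_dot)

lemma mat_mult_id_left[simp]: "mat_mult id_mat M = M"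
  by (intro ext) (simp add: mat_mult_dot)

lemma mat_mult_id_right[simp]: "mat_mult M id_mat = M"
  by (intro ext) (simp add: mat_mult_dot)

lemma mat_vec_zero[simp]: "mat_vec M (\<lambda>_. 0) = (\<lambda>_. 0)"
  by (rule ext) (simp add: mat_vec_dot)

lemma mat_vec_add:
  assumes "rowfin M"
  shows "mat_vec M (\<lambda>k. v k + w k) = (\<lambda>i. mat_vec M v i + mat_vec M w i)"
  using assms by (intro ext) (auto simp: mat_vec_dot rowfin_def intro!: dot_add_right)

lemma mat_vec_ev: "mat_vec M (ev j) i = M i j"
  by (simp add: mat_vec_dot)

lemma rowfin_mult:
  assumes "rowfin M" "rowfin N"
  shows "rowfin (mat_mult M N)"
  unfolding rowfin_def
proof
  fix i
  have "{k. mat_mult M N i k \<noteq> 0} \<subseteq> (\<Union>l\<in>{l. M i l \<noteq> 0}. {k. N l k \<noteq> 0})"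
  proof
    fix k assume "k \<in> {k. mat_mult M N i k \<noteq> 0}"
    then have "mat_mult M N i k \<noteq> 0" by simp
    then have "{l. M i l \<noteq> 0 \<and> N l k \<noteq> 0} \<noteq> {}"
    proof (rule contrapos_nn)
      assume h: "{l. M i l \<noteq> 0 \<and> N l k \<noteq> 0} = {}"
      show "mat_mult M N i k = 0" unfolding mat_mult_def by (simp only: h sum.empty)
    qed
    then show "k \<in> (\<Union>l\<in>{l. M i l \<noteq> 0}. {k. N l k \<noteq> 0})" by auto
  qed
  moreover have "finite (\<Union>l\<in>{l. M i l \<noteq> 0}. {k. N l k \<noteq> 0})"
    using assms by (auto simp: rowfin_def)
  ultimately show "finite {k. mat_mult M N i k \<noteq> 0}" by (rule finite_subset)
qed

lemma mat_vec_mult: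
  assumes "rowfin M" "rowfin N"
  shows "mat_vec (mat_mult M N) v = mat_vec M (mat_vec N v)"
proof
  fix i
  define R2 where "R2 = {l. M i l \<noteq> 0}"
  define R1 where "R1 = (\<Union>l\<in>R2. {k. N l k \<noteq> 0})"
  have f2: "finite R2" using assms by (auto simp: rowfin_def R2_def)
  have f1: "finite R1" using assms f2 by (auto simp: rowfin_def R1_def)
  have s1: "{k. mat_mult M N i k \<noteq> 0} \<subseteq> R1"
  proof
    fix k assume "k \<in> {k. mat_mult M N i k \<noteq> 0}"
    then have "mat_mult M N i k \<noteq> 0" by simp
    then have "{l. M i l \<noteq> 0 \<and> N l k \<noteq> 0} \<noteq> {}"
    proof (rule contrapos_nn)
      assume h: "{l. M i l \<noteq> 0 \<and> N l k \<noteq> 0} = {}"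
      show "mat_mult M N i k = 0" unfolding mat_mult_def by (simp only: h sum.empty)
    qed
    then show "k \<in> R1" by (auto simp: R1_def R2_def)
  qed
  have "mat_vec (mat_mult M N) v i = (\<Sum>k\<in>R1. mat_mult M N i k * v k)"
    unfolding mat_vec_dot by (rule dot_sumL[OF f1 s1])
  also have "\<dots> = (\<Sum>k\<in>R1. (\<Sum>l\<in>R2. M i l * N l k) * v k)"
    by (rule sum.cong, simp, subst mat_mult_dot, subst dot_sumL[OF f2]) (auto simp: R2_def)
  also have "\<dots> = (\<Sum>l\<in>R2. (\<Sum>k\<in>R1. M i l * (N l k * v k)))"
    by (simp add: sum_distrib_right mult.assoc sum.swap[of _ R1])
  also have "\<dots> = (\<Sum>l\<in>R2. M i l * mat_vec N v l)"
    apply (rule sum.cong, simp)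
    apply (subst mat_vec_dot, subst dot_sumL[OF f1])
    by (auto simp: R1_def sum_distrib_left)
  also have "\<dots> = mat_vec M (mat_vec N v) i"
    unfolding mat_vec_dot[of M] by (rule dot_sumL[OF f2, symmetric]) (auto simp: R2_def)
  finally show "mat_vec (mat_mult M N) v i = mat_vec M (mat_vec N v) i" .
qed

lemma mat_mult_assoc:
  assumes "rowfin M" "rowfin N"
  shows "mat_mult (mat_mult M N) P = mat_mult M (mat_mult N P)"
proof (intro ext)
  fix i j
  have "mat_mult (mat_mult M N) P i j = mat_vec M (mat_vec N (\<lambda>k. P k j)) i"
    by (simp add: mat_mult_vec[of "mat_mult M N"] mat_vec_mult[OF assms])
  also have "\<dots> = mat_mult M (mat_mult N P) i j"
    by (simp add: mat_mult_vec)
  finally show "mat_mult (mat_mult M N) P i j = mat_mult M (mat_mult N P) i j" .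
qed



lemma bnd_row: "bnd n M \<Longrightarrow> n \<le> i \<Longrightarrow> M i = ev i"
  by (auto simp: bnd_def)

lemma bnd_col: "bnd n M \<Longrightarrow> n \<le> j \<Longrightarrow> (\<lambda>k. M k j) = ev j"
  by (auto simp: bnd_def id_mat_def ev_def)

lemma bnd_mono: "bnd n M \<Longrightarrow> n \<le> m \<Longrightarrow> bnd m M"
  by (auto simp: bnd_def)

lemma bnd_rowfin: assumes "bnd n M" shows "rowfin M"
  unfolding rowfin_def
proof
  fix i
  have "{k. M i k \<noteq> 0} \<subseteq> insert i {..<n}"
  proof (rule subsetI, rule ccontr)
    fix k assume k: "k \<in> {k. M i k \<noteq> 0}" "k \<notin> insert i {..<n}"
    then have "n \<le> k" "k \<noteq> i" by auto
    then have "M i k = 0" using assms by (simp add: bnd_def id_mat_def)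
    then show False using k by simp
  qed
  then show "finite {k. M i k \<noteq> 0}" by (rule finite_subset) simp
qed

lemma fin_mats_bnd: "M \<in> fin_mats \<longleftrightarrow> (\<exists>n. bnd n M)"
proof
  assume "M \<in> fin_mats"
  then have f: "finite {(i, j). M i j \<noteq> id_mat i j}" by (simp add: fin_mats_def)
  let ?S = "fst ` {(i, j). M i j \<noteq> id_mat i j} \<union> snd ` {(i, j). M i j \<noteq> id_mat i j}"
  have "finite ?S" using f by simp
  then obtain n where n: "\<forall>x\<in>?S. x < n" using finite_nat_set_iff_bounded by blast
  have "bnd n M"
    unfolding bnd_def
  proof (intro allI impI)
    fix i j assume "n \<le> i \<or> n \<le> j"
    show "M i j = id_mat i j"
    proof (rule ccontr)
      assume "M i j \<noteq> id_mat i j"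
      then have ij: "(i,j) \<in> {(i, j). M i j \<noteq> id_mat i j}" by simp
      have "i \<in> ?S" using imageI[OF ij, of fst] by simp
      moreover have "j \<in> ?S" using imageI[OF ij, of snd] by simp
      ultimately have "i < n" "j < n" using n by auto
      with \<open>n \<le> i \<or> n \<le> j\<close> show False by linarith
    qed
  qed
  then show "\<exists>n. bnd n M" ..
next
  assume "\<exists>n. bnd n M"
  then obtain n where "bnd n M" ..
  then have "{(i, j). M i j \<noteq> id_mat i j} \<subseteq> {..<n} \<times> {..<n}"
    by (auto simp: bnd_def) (meson not_le)+
  then show "M \<in> fin_mats" unfolding fin_mats_def by (auto intro: finite_subset)
qed

lemma fin_mats_rowfin: "M \<in> fin_mats \<Longrightarrow> rowfin M"
  using fin_mats_bnd bnd_rowfin by blast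

lemma mat_mult_row_ev: "M i = ev i \<Longrightarrow> mat_mult M N i j = N i j"
  by (simp add: mat_mult_dot)

lemma mat_mult_col_ev: "(\<lambda>k. N k j) = ev j \<Longrightarrow> mat_mult M N i j = M i j"
  by (simp add: mat_mult_dot)

lemma bnd_mult:
  assumes "bnd n M" "bnd n N"
  shows "bnd n (mat_mult M N)"
  unfolding bnd_def
proof (intro allI impI)
  fix i j assume "n \<le> i \<or> n \<le> j"
  then show "mat_mult M N i j = id_mat i j"
  proof
    assume "n \<le> i"
    then show ?thesis using assms
      by (simp add: mat_mult_row_ev[OF bnd_row[OF assms(1)]] bnd_def)
  next
    assume "n \<le> j"
    then show ?thesis using assms
      by (simp add: mat_mult_col_ev[OF bnd_col[OF assms(2)]] bnd_def)
  qed
qed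

lemma bnd_common:
  assumes "M \<in> fin_mats" "N \<in> fin_mats"
  obtains n where "bnd n M" "bnd n N"
proof -
  obtain a b where "bnd a M" "bnd b N" using assms fin_mats_bnd by blast
  then have "bnd (max a b) M" "bnd (max a b) N" by (auto intro: bnd_mono)
  then show ?thesis using that by blast
qed

lemma fin_mats_mult: "M \<in> fin_mats \<Longrightarrow> N \<in> fin_mats \<Longrightarrow> mat_mult M N \<in> fin_mats"
  by (metis bnd_common bnd_mult fin_mats_bnd)

lemma id_fin[simp]: "id_mat \<in> fin_mats"
  unfolding fin_mats_def by simp

lemma id_GL[simp]: "id_mat \<in> GL_inf"
  unfolding GL_inf_def by (auto intro: bexI[of _ id_mat])

lemma fin_vecs_mat_vec:
  assumes "M \<in> fin_mats" "v \<in> fin_vecs"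
  shows "mat_vec M v \<in> fin_vecs"
proof -
  obtain n where n: "bnd n M" using assms fin_mats_bnd by blast
  have "{i. mat_vec M v i \<noteq> 0} \<subseteq> {..<n} \<union> {i. v i \<noteq> 0}"
  proof
    fix i assume i: "i \<in> {i. mat_vec M v i \<noteq> 0}"
    show "i \<in> {..<n} \<union> {i. v i \<noteq> 0}"
    proof (cases "n \<le> i")
      case True
      then have "mat_vec M v i = v i" by (simp add: mat_vec_dot bnd_row[OF n])
      then show ?thesis using i by simp
    qed simp
  qed
  then show ?thesis using assms unfolding fin_vecs_def by (auto intro: finite_subset)
qed

lemma GL_fin: "M \<in> GL_inf \<Longrightarrow> M \<in> fin_mats"
  by (simp add: GL_inf_def)

lemma GL_rowfin: "M \<in> GL_inf \<Longrightarrow> rowfin M"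
  by (simp add: GL_inf_def fin_mats_rowfin)

lemma GL_invE:
  assumes "M \<in> GL_inf"
  obtains N where "N \<in> GL_inf" "mat_mult M N = id_mat" "mat_mult N M = id_mat"
  using assms unfolding GL_inf_def by blast

lemma GL_mult:
  assumes "M \<in> GL_inf" "M' \<in> GL_inf"
  shows "mat_mult M M' \<in> GL_inf"
proof -
  obtain N where N: "N \<in> GL_inf" "mat_mult M N = id_mat" "mat_mult N M = id_mat"
    using assms(1) by (rule GL_invE)
  obtain N' where N': "N' \<in> GL_inf" "mat_mult M' N' = id_mat" "mat_mult N' M' = id_mat"
    using assms(2) by (rule GL_invE)
  have r: "rowfin M" "rowfin M'" "rowfin N" "rowfin N'" using assms N N' by (auto simp: GL_rowfin)
  have "mat_mult (mat_mult M M') (mat_mult N' N) = mat_mult M (mat_mult (mat_mult M' N') N)"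
    using r by (simp only: mat_mult_assoc rowfin_mult)
  then have "mat_mult (mat_mult M M') (mat_mult N' N) = id_mat" using N N' by simp
  moreover have "mat_mult (mat_mult N' N) (mat_mult M M') = mat_mult N' (mat_mult (mat_mult N M) M')"
    using r by (simp only: mat_mult_assoc rowfin_mult)
  then have "mat_mult (mat_mult N' N) (mat_mult M M') = id_mat" using N N' by simp
  moreover have "mat_mult N' N \<in> fin_mats" "mat_mult M M' \<in> fin_mats"
    using N N' assms by (auto simp: GL_fin fin_mats_mult)
  ultimately show ?thesis unfolding GL_inf_def by blast
qed

lemma G_mult[simp]: "(g, v) \<otimes>\<^bsub>G_semidirect\<^esub> (h, w) = (mat_mult g h, \<lambda>i. v i + mat_vec g w i)"
  by (simp add: G_semidirect_def)

lemma G_one[simp]: "\<one>\<^bsub>G_semidirect\<^esub> = (id_mat, \<lambda>i. 0)"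
  by (simp add: G_semidirect_def)

lemma G_carrier[simp]: "carrier G_semidirect = GL_inf \<times> fin_vecs"
  by (simp add: G_semidirect_def)

lemma zero_fin[simp]: "(\<lambda>i. 0) \<in> fin_vecs"
  by (simp add: fin_vecs_def)

lemma add_fin[simp]: "v \<in> fin_vecs \<Longrightarrow> w \<in> fin_vecs \<Longrightarrow> (\<lambda>i. v i + w i) \<in> fin_vecs"
  unfolding fin_vecs_def mem_Collect_eq
  by (rule finite_subset[of _ "{i. v i \<noteq> 0} \<union> {i. w i \<noteq> 0}"]) auto

lemma group_G: "group G_semidirect"
proof (rule groupI)
  fix x y assume "x \<in> carrier G_semidirect" "y \<in> carrier G_semidirect"
  then show "x \<otimes>\<^bsub>G_semidirect\<^esub> y \<in> carrier G_semidirect"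
    by (auto simp: GL_mult fin_vecs_mat_vec GL_fin)
next
  show "\<one>\<^bsub>G_semidirect\<^esub> \<in> carrier G_semidirect" by simp
next
  fix x y z assume "x \<in> carrier G_semidirect" "y \<in> carrier G_semidirect" "z \<in> carrier G_semidirect"
  then obtain g v h w k u where xyz: "x = (g, v)" "y = (h, w)" "z = (k, u)"
    "g \<in> GL_inf" "h \<in> GL_inf" "k \<in> GL_inf"
    by auto
  then have r: "rowfin g" "rowfin h" by (auto simp: GL_rowfin)
  show "x \<otimes>\<^bsub>G_semidirect\<^esub> y \<otimes>\<^bsub>G_semidirect\<^esub> z = x \<otimes>\<^bsub>G_semidirect\<^esub> (y \<otimes>\<^bsub>G_semidirect\<^esub> z)"
    using r by (simp add: xyz mat_mult_assoc mat_vec_mult mat_vec_add add.assoc)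
next
  fix x assume "x \<in> carrier G_semidirect"
  then show "\<one>\<^bsub>G_semidirect\<^esub> \<otimes>\<^bsub>G_semidirect\<^esub> x = x" by auto
next
  fix x assume "x \<in> carrier G_semidirect"
  then obtain g v where x: "x = (g, v)" "g \<in> GL_inf" "v \<in> fin_vecs" by auto
  obtain N where N: "N \<in> GL_inf" "mat_mult g N = id_mat" "mat_mult N g = id_mat"
    using x(2) by (rule GL_invE)
  have "(N, mat_vec N v) \<in> carrier G_semidirect"
    using N x by (simp add: fin_vecs_mat_vec GL_fin)
  moreover have "(N, mat_vec N v) \<otimes>\<^bsub>G_semidirect\<^esub> x = \<one>\<^bsub>G_semidirect\<^esub>"
    using N x by simp
  ultimately show "\<exists>y\<in>carrier G_semidirect. y \<otimes>\<^bsub>G_semidirect\<^esub> x = \<one>\<^bsub>G_semidirect\<^esub>" by blast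
qed



definition tv :: "vec2 \<Rightarrow> vec2 \<Rightarrow> mat2" where
  "tv u f = (\<lambda>i j. id_mat i j + u i * f j)"

lemma bit_mult_eq_1[simp]: "(a::bit) * b = 1 \<longleftrightarrow> a = 1 \<and> b = 1"
  by (cases a; cases b) simp_all

lemma dot_ev_col1[simp]: "dot a (\<lambda>k. ev k j) = a j"
  by (simp add: ev_col)

lemma dot_ev_col2[simp]: "dot (\<lambda>k. ev k j) a = a j"
  by (simp add: ev_col)

lemma fin_scal: "f \<in> fin_vecs \<Longrightarrow> finite {k. c * f k \<noteq> 0}"
  unfolding fin_vecs_def by (rule finite_subset[of _ "{k. f k \<noteq> 0}"]) auto

lemma mult_left_rank1:
  assumes "rowfin A" "f \<in> fin_vecs"
  shows "mat_mult (\<lambda>i k. A i k + a i * f k) B = (\<lambda>i j. mat_mult A B i j + a i * dot f (\<lambda>k. B k j))"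
proof (intro ext)
  fix i j
  have "mat_mult (\<lambda>i k. A i k + a i * f k) B i j = dot (\<lambda>k. A i k + a i * f k) (\<lambda>k. B k j)"
    by (simp add: mat_mult_dot)
  also have "\<dots> = dot (A i) (\<lambda>k. B k j) + dot (\<lambda>k. a i * f k) (\<lambda>k. B k j)"
    using assms fin_scal[OF assms(2)] by (intro dot_add_left) (auto simp: rowfin_def)
  also have "\<dots> = mat_mult A B i j + a i * dot f (\<lambda>k. B k j)"
    by (simp add: dot_scal_left mat_mult_dot)
  finally show "mat_mult (\<lambda>i k. A i k + a i * f k) B i j = mat_mult A B i j + a i * dot f (\<lambda>k. B k j)" .
qed

lemma mult_right_rank1:
  assumes "rowfin M"
  shows "mat_mult M (\<lambda>k j. B k j + u k * f j) = (\<lambda>i j. mat_mult M B i j + mat_vec M u i * f j)"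
proof (intro ext)
  fix i j
  have "mat_mult M (\<lambda>k j. B k j + u k * f j) i j = dot (M i) (\<lambda>k. B k j + u k * f j)"
    by (simp add: mat_mult_dot)
  also have "\<dots> = dot (M i) (\<lambda>k. B k j) + dot (M i) (\<lambda>k. f j * u k)"
    using assms by (simp add: dot_add_right rowfin_def mult.commute)
  also have "\<dots> = mat_mult M B i j + mat_vec M u i * f j"
    by (simp add: dot_scal_right mat_mult_dot mat_vec_dot mult.commute)
  finally show "mat_mult M (\<lambda>k j. B k j + u k * f j) i j = mat_mult M B i j + mat_vec M u i * f j" .
qed

lemma tv_rowfin: "f \<in> fin_vecs \<Longrightarrow> rowfin (tv u f)"
  unfolding rowfin_def tv_def fin_vecs_def
proof
  fix i assume f: "f \<in> {v. finite {i. v i \<noteq> 0}}"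
  show "finite {k. id_mat i k + u i * f k \<noteq> 0}"
    by (rule finite_subset[of _ "insert i {k. f k \<noteq> 0}"]) (use f in \<open>auto simp: id_mat_def\<close>)
qed

lemma tv_bnd:
  assumes "\<forall>k. u k \<noteq> 0 \<longrightarrow> k < n" "\<forall>k. f k \<noteq> 0 \<longrightarrow> k < n"
  shows "bnd n (tv u f)"
  using assms unfolding bnd_def tv_def by (metis add_0_right mult_zero_left mult_zero_right not_le)

lemma fin_vec_bound: "v \<in> fin_vecs \<Longrightarrow> \<exists>n. \<forall>k. v k \<noteq> 0 \<longrightarrow> k < n"
  unfolding fin_vecs_def using finite_nat_set_iff_bounded by auto

lemma tv_fin:
  assumes "u \<in> fin_vecs" "f \<in> fin_vecs"
  shows "tv u f \<in> fin_mats"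
proof -
  obtain a b where "\<forall>k. u k \<noteq> 0 \<longrightarrow> k < a" "\<forall>k. f k \<noteq> 0 \<longrightarrow> k < b"
    using fin_vec_bound assms by blast
  then have "bnd (max a b) (tv u f)" by (intro tv_bnd) auto
  then show ?thesis using fin_mats_bnd by blast
qed

lemma tv_as: "tv u f = (\<lambda>i j. id_mat i j + u i * f j)"
  by (simp add: tv_def)

lemma tv_mat_vec:
  assumes "f \<in> fin_vecs"
  shows "mat_vec (tv u f) v = (\<lambda>i. v i + u i * dot f v)"
proof
  fix i
  have "mat_vec (tv u f) v i = dot (\<lambda>k. id_mat i k + u i * f k) v"
    by (simp add: mat_vec_dot tv_def)
  also have "\<dots> = dot (ev i) v + dot (\<lambda>k. u i * f k) v"
    using fin_scal[OF assms] by (subst dot_add_left) (auto simp: ev_def)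
  finally show "mat_vec (tv u f) v i = v i + u i * dot f v" by (simp add: dot_scal_left)
qed

lemma tv_mult_left:
  assumes "f \<in> fin_vecs"
  shows "mat_mult (tv u f) B = (\<lambda>i j. B i j + u i * dot f (\<lambda>k. B k j))"
  using mult_left_rank1[of id_mat f u B] assms
  by (simp add: tv_def rowfin_def ev_def)

lemma tv_invol:
  assumes "f \<in> fin_vecs" "dot f u = 0"
  shows "mat_mult (tv u f) (tv u f) = id_mat"
proof (intro ext)
  fix i j
  have "dot f (\<lambda>k. id_mat k j + u k * f j) = f j"
    using assms by (simp add: dot_add_right fin_vecs_def dot_scal_right mult.commute[of "u _"])
  then show "mat_mult (tv u f) (tv u f) i j = id_mat i j"
    using assms by (simp add: tv_mult_left) (simp add: tv_def add.assoc)
qed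

lemma tv_GL:
  assumes "u \<in> fin_vecs" "f \<in> fin_vecs" "dot f u = 0"
  shows "tv u f \<in> GL_inf"
  using assms tv_invol tv_fin unfolding GL_inf_def by blast

lemma conj_tv:
  assumes "rowfin x" "f \<in> fin_vecs" "mat_mult x y = id_mat"
  shows "mat_mult (mat_mult x (tv u f)) y = tv (mat_vec x u) (\<lambda>j. dot f (\<lambda>k. y k j))"
proof -
  have "mat_mult x (tv u f) = (\<lambda>i j. x i j + mat_vec x u i * f j)"
    using mult_right_rank1[OF assms(1), of id_mat u f] by (simp add: tv_def)
  then have "mat_mult (mat_mult x (tv u f)) y = (\<lambda>i j. mat_mult x y i j + mat_vec x u i * dot f (\<lambda>k. y k j))"
    using mult_left_rank1[OF assms(1,2)] by simp
  then show ?thesis using assms(3) by (simp add: tv_def)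
qed

lemma ev_fin[simp]: "ev p \<in> fin_vecs"
  unfolding fin_vecs_def ev_def mem_Collect_eq by (rule finite_subset[of _ "{p}"]) auto

lemma functional_exists:
  assumes "v \<noteq> (\<lambda>_. 0)" "w \<noteq> (\<lambda>_. 0)"
  shows "\<exists>f. f \<in> fin_vecs \<and> {k. f k \<noteq> 0} \<subseteq> {k. v k \<noteq> 0} \<union> {k. w k \<noteq> 0} \<and> dot f v = 1 \<and> dot f w = 1"
proof -
  obtain p where p: "v p = 1" using assms by (metis bit_not_zero_iff)
  obtain q where q: "w q = 1" using assms by (metis bit_not_zero_iff)
  show ?thesis
  proof (cases "w p = 1")
    case True
    have "{k. ev p k \<noteq> 0} \<subseteq> {k. v k \<noteq> 0} \<union> {k. w k \<noteq> 0}" using p by (auto simp: ev_def)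
    then show ?thesis using p True by (intro exI[of _ "ev p"]) simp
  next
    case False
    show ?thesis
    proof (cases "v q = 1")
      case True
      have "{k. ev q k \<noteq> 0} \<subseteq> {k. v k \<noteq> 0} \<union> {k. w k \<noteq> 0}" using q by (auto simp: ev_def)
      then show ?thesis using q True by (intro exI[of _ "ev q"]) simp
    next
      case False2: False
      have pq: "p \<noteq> q" using p False2 by auto
      have "dot (\<lambda>k. ev p k + ev q k) v = 1" "dot (\<lambda>k. ev p k + ev q k) w = 1"
        using p q False False2 ev_fin[of p] ev_fin[of q] by (simp_all add: dot_add_left fin_vecs_def)
      moreover have "(\<lambda>k. ev p k + ev q k) \<in> fin_vecs" by simp
      moreover have "{k. ev p k + ev q k \<noteq> 0} \<subseteq> {k. v k \<noteq> 0} \<union> {k. w k \<noteq> 0}"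
        using p q by (auto simp: ev_def split: if_splits)
      ultimately show ?thesis by blast
    qed
  qed
qed



interpretation G: group G_semidirect by (rule group_G)

lemma transl_mem[simp]: "(a, b) \<in> transl_subgroup \<longleftrightarrow> a = id_mat \<and> b \<in> fin_vecs"
  by (auto simp: transl_subgroup_def)

lemma inv_invol:
  assumes "t \<in> GL_inf" "mat_mult t t = id_mat"
  shows "inv\<^bsub>G_semidirect\<^esub> (t, \<lambda>_. 0) = (t, \<lambda>_. 0)"
  using assms by (intro G.inv_equality) auto

lemma zero_vec_fun[simp]: "(\<lambda>i. (0::bit) + 0) = (\<lambda>_. 0)" by simp

context
  fixes H assumes nH: "H \<lhd> G_semidirect"
begin

lemma H_sub: "subgroup H G_semidirect" using G.normal_invE(1)[OF nH] .

lemma H_mult: "a \<in> H \<Longrightarrow> b \<in> H \<Longrightarrow> a \<otimes>\<^bsub>G_semidirect\<^esub> b \<in> H"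
  using H_sub by (rule subgroup.m_closed)

lemma H_one: "(id_mat, \<lambda>_. 0) \<in> H"
  using subgroup.one_closed[OF H_sub] by simp

lemma H_carr: "a \<in> H \<Longrightarrow> a \<in> carrier G_semidirect"
  using H_sub by (rule subgroup.mem_carrier)

lemma H_inv: "a \<in> H \<Longrightarrow> inv\<^bsub>G_semidirect\<^esub> a \<in> H"
  using H_sub by (rule subgroup.m_inv_closed)

lemma H_conj: "x \<in> carrier G_semidirect \<Longrightarrow> a \<in> H \<Longrightarrow> x \<otimes>\<^bsub>G_semidirect\<^esub> a \<otimes>\<^bsub>G_semidirect\<^esub> inv\<^bsub>G_semidirect\<^esub> x \<in> H"
  using G.normal_invE(2)[OF nH] .

lemma conj_invol_mat:
  assumes "t \<in> GL_inf" "mat_mult t t = id_mat" "(M, \<lambda>_. 0) \<in> H"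
  shows "(mat_mult (mat_mult t M) t, \<lambda>_. 0) \<in> H"
proof -
  have "(t, \<lambda>_. 0) \<otimes>\<^bsub>G_semidirect\<^esub> (M, \<lambda>_. 0) \<otimes>\<^bsub>G_semidirect\<^esub> inv\<^bsub>G_semidirect\<^esub> (t, \<lambda>_. 0) \<in> H"
    using assms by (intro H_conj) auto
  then show ?thesis using assms by (simp add: inv_invol)
qed

lemma conj_invol_vec:
  assumes "t \<in> GL_inf" "mat_mult t t = id_mat" "(id_mat, v) \<in> H"
  shows "(id_mat, mat_vec t v) \<in> H"
proof -
  have "(t, \<lambda>_. 0) \<otimes>\<^bsub>G_semidirect\<^esub> (id_mat, v) \<otimes>\<^bsub>G_semidirect\<^esub> inv\<^bsub>G_semidirect\<^esub> (t, \<lambda>_. 0) \<in> H"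
    using assms by (intro H_conj) auto
  then show ?thesis using assms by (simp add: inv_invol)
qed

lemma mult_zero_pairs: "(a, \<lambda>_. 0) \<in> H \<Longrightarrow> (b, \<lambda>_. 0) \<in> H \<Longrightarrow> (mat_mult a b, \<lambda>_. 0) \<in> H"
  using H_mult[of "(a, \<lambda>_. 0)" "(b, \<lambda>_. 0)"] by simp

lemma transl_in_H:
  assumes v: "(id_mat, v) \<in> H" "v \<noteq> (\<lambda>_. 0)"
  shows "transl_subgroup \<subseteq> H"
proof
  fix x assume "x \<in> transl_subgroup"
  then obtain w where x: "x = (id_mat, w)" "w \<in> fin_vecs" by (auto simp: transl_subgroup_def)
  show "x \<in> H"
  proof (cases "w = (\<lambda>_. 0)")
    case True
    then show ?thesis using x H_one by simp
  next
    case False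
    obtain f where f: "f \<in> fin_vecs" "dot f v = 1" "dot f w = 1"
      using functional_exists[OF v(2) False] by blast
    have vf: "v \<in> fin_vecs" using H_carr[OF v(1)] by simp
    have d: "dot f (\<lambda>i. v i + w i) = 0"
      using f by (simp add: dot_add_right fin_vecs_def)
    have t: "tv (\<lambda>i. v i + w i) f \<in> GL_inf" "mat_mult (tv (\<lambda>i. v i + w i) f) (tv (\<lambda>i. v i + w i) f) = id_mat"
      using vf x f d by (auto intro: tv_GL tv_invol)
    have "mat_vec (tv (\<lambda>i. v i + w i) f) v = w"
      using f by (simp add: tv_mat_vec add.assoc[symmetric])
    then show ?thesis using conj_invol_vec[OF t v(1)] x by simp
  qed
qed

lemma H_trivial:
  assumes no: "\<And>v. (id_mat, v) \<in> H \<Longrightarrow> v = (\<lambda>_. 0)"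
  shows "H = {(id_mat, \<lambda>_. 0)}"
proof
  show "{(id_mat, \<lambda>_. 0)} \<subseteq> H" using H_one by simp
next
  show "H \<subseteq> {(id_mat, \<lambda>_. 0)}"
  proof
    fix a assume a: "a \<in> H"
    then obtain g u where gu: "a = (g, u)" "g \<in> GL_inf" "u \<in> fin_vecs" using H_carr by fastforce
    have fix_all: "mat_vec g w = w" if w: "w \<in> fin_vecs" for w
    proof -
      let ?x = "(id_mat, w)"
      have xc: "?x \<in> carrier G_semidirect" using w by simp
      have ix: "inv\<^bsub>G_semidirect\<^esub> ?x = ?x"
        using w by (intro G.inv_equality) auto
      have c1: "?x \<otimes>\<^bsub>G_semidirect\<^esub> a \<otimes>\<^bsub>G_semidirect\<^esub> ?x \<in> H"
        using H_conj[OF xc a] ix by simp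
      let ?z = "(id_mat, \<lambda>i. w i + mat_vec g w i)"
      have zc: "?z \<in> carrier G_semidirect"
        using w gu by (simp add: fin_vecs_mat_vec GL_fin)
      have eq: "?x \<otimes>\<^bsub>G_semidirect\<^esub> a \<otimes>\<^bsub>G_semidirect\<^esub> ?x = ?z \<otimes>\<^bsub>G_semidirect\<^esub> a"
        using gu by (simp add: add.commute add.left_commute)
      have ac: "a \<in> carrier G_semidirect" using H_carr[OF a] .
      have "?z \<otimes>\<^bsub>G_semidirect\<^esub> a \<otimes>\<^bsub>G_semidirect\<^esub> inv\<^bsub>G_semidirect\<^esub> a = ?z \<otimes>\<^bsub>G_semidirect\<^esub> (a \<otimes>\<^bsub>G_semidirect\<^esub> inv\<^bsub>G_semidirect\<^esub> a)"
        by (rule G.m_assoc[OF zc ac G.inv_closed[OF ac]])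
      also have "\<dots> = ?z \<otimes>\<^bsub>G_semidirect\<^esub> \<one>\<^bsub>G_semidirect\<^esub>" by (simp only: G.r_inv[OF ac])
      also have "\<dots> = ?z" by (rule G.r_one[OF zc])
      finally have zz: "?z \<otimes>\<^bsub>G_semidirect\<^esub> a \<otimes>\<^bsub>G_semidirect\<^esub> inv\<^bsub>G_semidirect\<^esub> a = ?z" .
      have "?z \<otimes>\<^bsub>G_semidirect\<^esub> a \<otimes>\<^bsub>G_semidirect\<^esub> inv\<^bsub>G_semidirect\<^esub> a \<in> H"
        using H_mult[OF c1 H_inv[OF a]] eq by (simp only:)
      then have "?z \<in> H" by (simp only: zz)
      then have z0: "(\<lambda>i. w i + mat_vec g w i) = (\<lambda>_. 0)" by (rule no)
      show ?thesis
      proof (intro ext)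
        fix i
        have "w i + mat_vec g w i = 0" using fun_cong[OF z0, of i] by simp
        then have "w i + (w i + mat_vec g w i) = w i" by simp
        then show "mat_vec g w i = w i" by (simp add: add.assoc[symmetric])
      qed
    qed
    have "g = id_mat"
    proof (intro ext)
      fix i j
      have "mat_vec g (ev j) = ev j" using fix_all by simp
      then have "g i j = ev j i" by (metis mat_vec_ev)
      then show "g i j = id_mat i j" by (simp add: ev_def id_mat_def)
    qed
    then have "u = (\<lambda>_. 0)" by (intro no) (use a gu in simp)
    then show "a \<in> {(id_mat, \<lambda>_. 0)}" using gu \<open>g = id_mat\<close> by simp
  qed
qed

end



lemma tv_zero_left[simp]: "tv (\<lambda>_. 0) f = id_mat"
  by (intro ext) (simp add: tv_def)

lemma tv_zero_right[simp]: "tv u (\<lambda>_. 0) = id_mat"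
  by (intro ext) (simp add: tv_def)

lemma bit_add_eq_0: "(a::bit) + b = 0 \<longleftrightarrow> a = b"
  by (cases a; cases b) simp_all

lemma ev_ne_zero: "ev m \<noteq> (\<lambda>_. 0)"
  by (metis ev_def zero_neq_one)

context
  fixes H assumes nH: "H \<lhd> G_semidirect"
begin

lemma stepA:
  assumes u0: "u0 \<in> fin_vecs" "u0 \<noteq> (\<lambda>_. 0)" "u0 m = 0" "(tv u0 (ev m), \<lambda>_. 0) \<in> H"
    and u: "u \<in> fin_vecs" "u m = 0"
  shows "(tv u (ev m), \<lambda>_. 0) \<in> H"
proof (cases "u = (\<lambda>_. 0)")
  case True
  then show ?thesis using H_one[OF nH] by simp
next
  case False
  obtain h where h: "h \<in> fin_vecs" "dot h u0 = 1" "dot h u = 1"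
    using functional_exists[OF u0(2) False] by blast
  let ?a = "\<lambda>i. u0 i + u i"
  let ?x = "tv ?a h"
  have d: "dot h ?a = 0" using h by (simp add: dot_add_right fin_vecs_def)
  have xG: "?x \<in> GL_inf" "mat_mult ?x ?x = id_mat"
    using u0 u h d by (auto intro: tv_GL tv_invol)
  have c: "(mat_mult (mat_mult ?x (tv u0 (ev m))) ?x, \<lambda>_. 0) \<in> H"
    by (rule conj_invol_mat[OF nH xG u0(4)])
  have "mat_mult (mat_mult ?x (tv u0 (ev m))) ?x = tv (mat_vec ?x u0) (\<lambda>j. dot (ev m) (\<lambda>k. ?x k j))"
    by (rule conj_tv[OF tv_rowfin[OF h(1)] ev_fin xG(2)])
  also have "mat_vec ?x u0 = u"
    using h by (simp add: tv_mat_vec add.assoc[symmetric])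
  also have "(\<lambda>j. dot (ev m) (\<lambda>k. ?x k j)) = ev m"
    using u0 u by (simp add: tv_def)
  finally show ?thesis using c by simp
qed

lemma stepB:
  assumes u0: "u0 \<in> fin_vecs" "u0 \<noteq> (\<lambda>_. 0)" "u0 m = 0" "(tv u0 (ev m), \<lambda>_. 0) \<in> H"
    and u: "u \<in> fin_vecs" "f \<in> fin_vecs" "dot f u = 0"
  shows "(tv u f, \<lambda>_. 0) \<in> H"
proof (cases "f = (\<lambda>_. 0)")
  case True
  then show ?thesis using H_one[OF nH] by simp
next
  case False
  obtain w where w: "w \<in> fin_vecs" "dot w f = 1" "dot w (ev m) = 1"
    using functional_exists[OF False ev_ne_zero] by blast
  have wm: "w m = 1" using w by simp
  let ?g = "\<lambda>k. f k + ev m k"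
  have gf: "?g \<in> fin_vecs" using u by simp
  have dg: "dot ?g w = 0"
    using w u ev_fin[of m] by (simp add: dot_add_left fin_vecs_def dot_comm[of f w])
  let ?y = "tv w ?g"
  have yG: "?y \<in> GL_inf" "mat_mult ?y ?y = id_mat"
    using w gf dg by (auto intro: tv_GL tv_invol)
  let ?u' = "mat_vec ?y u"
  have dgu: "dot ?g u = u m"
    using u ev_fin[of m] by (simp add: dot_add_left fin_vecs_def)
  have u'm: "?u' m = 0" using dgu wm by (simp add: tv_mat_vec[OF gf])
  have u'f: "?u' \<in> fin_vecs" using yG u by (simp add: fin_vecs_mat_vec GL_fin)
  have A: "(tv ?u' (ev m), \<lambda>_. 0) \<in> H" by (rule stepA[OF u0 u'f u'm])
  have c: "(mat_mult (mat_mult ?y (tv ?u' (ev m))) ?y, \<lambda>_. 0) \<in> H"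
    by (rule conj_invol_mat[OF nH yG A])
  have "mat_mult (mat_mult ?y (tv ?u' (ev m))) ?y = tv (mat_vec ?y ?u') (\<lambda>j. dot (ev m) (\<lambda>k. ?y k j))"
    by (rule conj_tv[OF tv_rowfin[OF gf] ev_fin yG(2)])
  also have "mat_vec ?y ?u' = u"
    using yG tv_rowfin[OF gf] by (simp flip: mat_vec_mult)
  also have "(\<lambda>j. dot (ev m) (\<lambda>k. ?y k j)) = f"
    using wm by (intro ext) (simp add: tv_def add.assoc[symmetric] add.commute[of "ev m _"])
  finally show ?thesis using c by simp
qed

lemma all_tv:
  assumes u0: "u0 \<in> fin_vecs" "u0 \<noteq> (\<lambda>_. 0)" "u0 m = 0" "(tv u0 (ev m), \<lambda>_. 0) \<in> H"
  shows "\<forall>u f. u \<in> fin_vecs \<longrightarrow> f \<in> fin_vecs \<longrightarrow> dot f u = 0 \<longrightarrow> (tv u f, \<lambda>_. 0) \<in> H"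
  using stepB[OF u0] by blast

end



context
  fixes H assumes nH: "H \<lhd> G_semidirect"
begin

lemma get_tv:
  assumes g: "(g, \<lambda>_. 0) \<in> H" "g \<in> GL_inf" "g \<noteq> id_mat"
  shows "\<exists>u0 m. u0 \<in> fin_vecs \<and> u0 \<noteq> (\<lambda>_. 0) \<and> u0 m = 0 \<and> (tv u0 (ev m), \<lambda>_. 0) \<in> H"
proof -
  obtain N where N: "N \<in> GL_inf" "mat_mult g N = id_mat" "mat_mult N g = id_mat"
    using g(2) by (rule GL_invE)
  have "inv\<^bsub>G_semidirect\<^esub> (g, \<lambda>_. 0) = (N, \<lambda>_. 0)"
    using N g by (intro G.inv_equality) auto
  then have NH: "(N, \<lambda>_. 0) \<in> H" using H_inv[OF nH g(1)] by simp
  obtain n where n: "bnd n g" "bnd n N" using bnd_common[OF GL_fin[OF g(2)] GL_fin[OF N(1)]] by blast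
  obtain i p where ip: "g i p \<noteq> id_mat i p" using g(3) by (meson ext)
  have pn: "p < n"
  proof (rule ccontr)
    assume "\<not> p < n"
    then have "g i p = id_mat i p" using n(1) by (simp add: bnd_def)
    then show False using ip by simp
  qed
  let ?t = "tv (ev p) (ev n)"
  have dt: "dot (ev n) (ev p) = 0" using pn by (simp only: dot_ev_left) (simp add: ev_def)
  have tG: "?t \<in> GL_inf" "mat_mult ?t ?t = id_mat"
    using dt by (auto intro: tv_GL tv_invol)
  have c1: "(mat_mult (mat_mult ?t N) ?t, \<lambda>_. 0) \<in> H"
    by (rule conj_invol_mat[OF nH tG NH])
  have c2: "(mat_mult g (mat_mult (mat_mult ?t N) ?t), \<lambda>_. 0) \<in> H"
    by (rule mult_zero_pairs[OF nH g(1) c1])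
  have rg: "rowfin g" "rowfin N" "rowfin ?t" using g N tG by (auto simp: GL_rowfin)
  have "mat_mult g (mat_mult (mat_mult ?t N) ?t) = mat_mult (mat_mult (mat_mult g ?t) N) ?t"
    using rg by (simp add: mat_mult_assoc rowfin_mult)
  also have "mat_mult (mat_mult g ?t) N = tv (mat_vec g (ev p)) (\<lambda>j. dot (ev n) (\<lambda>k. N k j))"
    by (rule conj_tv[OF rg(1) ev_fin N(2)])
  also have "(\<lambda>j. dot (ev n) (\<lambda>k. N k j)) = ev n"
    using bnd_row[OF n(2), of n] by simp
  also have "mat_vec g (ev p) = (\<lambda>i. g i p)" by (simp add: mat_vec_ev[abs_def])
  finally have eq1: "mat_mult g (mat_mult (mat_mult ?t N) ?t) = mat_mult (tv (\<lambda>i. g i p) (ev n)) ?t" .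
  let ?M = "tv (\<lambda>i. g i p) (ev n)"
  have "mat_mult ?M ?t = (\<lambda>i j. mat_mult ?M id_mat i j + mat_vec ?M (ev p) i * ev n j)"
    using mult_right_rank1[OF tv_rowfin[OF ev_fin], of "\<lambda>i. g i p" n id_mat "ev p" "ev n"]
    by (simp add: tv_def[of "ev p"])
  also have "\<dots> = tv (\<lambda>i. g i p + ev p i) (ev n)"
    using pn by (intro ext) (simp only: mat_mult_id_right mat_vec_ev, auto simp: tv_def ev_def id_mat_def distrib_right)
  finally have eq2: "mat_mult ?M ?t = tv (\<lambda>i. g i p + ev p i) (ev n)" .
  have inH: "(tv (\<lambda>i. g i p + ev p i) (ev n), \<lambda>_. 0) \<in> H"
    using c2 eq1 eq2 by simp
  have nz: "(\<lambda>i. g i p + ev p i) \<noteq> (\<lambda>_. 0)"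
  proof
    assume "(\<lambda>i. g i p + ev p i) = (\<lambda>_. 0)"
    then have "g i p + ev p i = 0" by (metis)
    then have "g i p = ev p i" by (simp add: bit_add_eq_0)
    then show False using ip by (simp add: ev_def id_mat_def)
  qed
  have zn: "g n p + ev p n = 0"
    using n(1) pn by (simp add: bnd_def id_mat_def ev_def)
  have fin: "(\<lambda>i. g i p + ev p i) \<in> fin_vecs"
  proof -
    have "mat_vec g (ev p) \<in> fin_vecs" using g(2) by (simp add: fin_vecs_mat_vec GL_fin)
    then have "(\<lambda>i. g i p) \<in> fin_vecs" by (simp add: mat_vec_ev[abs_def])
    then show ?thesis by simp
  qed
  show ?thesis using inH nz zn fin by blast
qed

lemma gen_GL:
  assumes allT: "\<forall>u f. u \<in> fin_vecs \<longrightarrow> f \<in> fin_vecs \<longrightarrow> dot f u = 0 \<longrightarrow> (tv u f, \<lambda>_. 0) \<in> H"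
  shows "h \<in> GL_inf \<Longrightarrow> bnd n h \<Longrightarrow> (h, \<lambda>_. 0) \<in> H"
proof (induction n arbitrary: h)
  case 0
  then have "h = id_mat" by (intro ext) (simp add: bnd_def)
  then show ?case using H_one[OF nH] by (simp only:)
next
  case (Suc n)
  note hG = Suc.prems(1) and hb = Suc.prems(2)
  obtain N where N: "N \<in> GL_inf" "mat_mult h N = id_mat" "mat_mult N h = id_mat"
    using hG by (rule GL_invE)
  define v where "v = (\<lambda>i. h i n)"
  have vfin: "v \<in> fin_vecs"
  proof -
    have "mat_vec h (ev n) \<in> fin_vecs" using hG by (simp add: fin_vecs_mat_vec GL_fin)
    then show ?thesis by (simp add: v_def mat_vec_ev[abs_def])
  qed
  have vnz: "v \<noteq> (\<lambda>_. 0)"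
  proof
    assume v0: "v = (\<lambda>_. 0)"
    have "mat_mult N h n n = dot (N n) v" by (simp add: mat_mult_dot v_def)
    also have "\<dots> = 0" using v0 by simp
    finally show False using N(3) by (simp add: id_mat_def)
  qed
  have vsupp: "\<forall>i. v i \<noteq> 0 \<longrightarrow> i < Suc n"
  proof (intro allI impI, rule ccontr)
    fix i assume vi: "v i \<noteq> 0" "\<not> i < Suc n"
    then have "Suc n \<le> i" "i \<noteq> n" by auto
    then have "h i n = 0" using hb by (simp add: bnd_def id_mat_def)
    then show False using vi by (simp add: v_def)
  qed
  obtain f where f: "f \<in> fin_vecs" "{k. f k \<noteq> 0} \<subseteq> {k. v k \<noteq> 0} \<union> {k. ev n k \<noteq> 0}"
      "dot f v = 1" "dot f (ev n) = 1"
    using functional_exists[OF vnz ev_ne_zero] by blast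
  have fsupp: "\<forall>k. f k \<noteq> 0 \<longrightarrow> k < Suc n"
  proof (intro allI impI)
    fix k assume "f k \<noteq> 0"
    then have "v k \<noteq> 0 \<or> ev n k \<noteq> 0" using f(2) by blast
    then show "k < Suc n" using vsupp by (auto simp: ev_def split: if_splits)
  qed
  define a where "a = (\<lambda>i. v i + ev n i)"
  have afin: "a \<in> fin_vecs" using vfin by (simp add: a_def)
  have da: "dot f a = 0" using f by (simp add: a_def dot_add_right fin_vecs_def)
  define x where "x = tv a f"
  have xG: "x \<in> GL_inf" "mat_mult x x = id_mat"
    using afin f da by (auto simp: x_def intro: tv_GL tv_invol)
  define xh where "xh = mat_mult x h"
  have xh_eq: "xh i j = h i j + a i * dot f (\<lambda>k. h k j)" for i j
    by (simp add: xh_def x_def tv_mult_left[OF f(1)])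
  have xh_n: "xh i n = ev n i" for i
    using f(3) unfolding v_def by (simp add: xh_eq a_def v_def add.assoc[symmetric])
  have xh_big: "xh i j = h i j" if "Suc n \<le> j" for i j
  proof -
    have "(\<lambda>k. h k j) = ev j" by (rule bnd_col[OF hb that])
    moreover have "f j = 0" using fsupp that by (meson bit_not_zero_iff not_less)
    ultimately show ?thesis by (simp add: xh_eq)
  qed
  define s where "s = (\<lambda>j. xh n j + ev n j)"
  have ssupp: "\<forall>j. s j \<noteq> 0 \<longrightarrow> j < Suc n"
  proof (intro allI impI, rule ccontr)
    fix j assume "s j \<noteq> 0" "\<not> j < Suc n"
    then have "Suc n \<le> j" by simp
    then have "xh n j = 0" "ev n j = 0" using hb by (auto simp: xh_big bnd_def id_mat_def ev_def)
    then show False using \<open>s j \<noteq> 0\<close> by (simp add: s_def)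
  qed
  have sfin: "s \<in> fin_vecs"
    unfolding fin_vecs_def mem_Collect_eq
    by (rule finite_subset[of _ "{..<Suc n}"]) (use ssupp in auto)
  have ds: "dot s (ev n) = 0" by (simp only: dot_ev_right) (simp add: s_def xh_n)
  define z where "z = tv (ev n) s"
  have zG: "z \<in> GL_inf" "mat_mult z z = id_mat"
    using sfin ds by (auto simp: z_def intro: tv_GL tv_invol)
  have xhG: "xh \<in> GL_inf" using xG hG by (simp add: xh_def GL_mult)
  define y where "y = mat_mult xh z"
  have y_eq: "y i j = xh i j + ev n i * s j" for i j
  proof -
    have "y = (\<lambda>i j. mat_mult xh id_mat i j + mat_vec xh (ev n) i * s j)"
      unfolding y_def z_def tv_as
      by (rule mult_right_rank1[OF GL_rowfin[OF xhG]])
    then show ?thesis by (simp add: mat_vec_ev xh_n)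
  qed
  have yb: "bnd n y"
    unfolding bnd_def
  proof (intro allI impI)
    fix i j assume ij: "n \<le> i \<or> n \<le> j"
    show "y i j = id_mat i j"
    proof (cases "i = n")
      case True
      then show ?thesis by (simp add: y_eq s_def add.assoc[symmetric] id_mat_def ev_def)
    next
      case inn: False
      then have y1: "y i j = xh i j" by (simp add: y_eq ev_def)
      show ?thesis
      proof (cases "n < i")
        case True
        then have "v i = 0" using vsupp by (meson bit_not_zero_iff not_less_eq)
        then have "a i = 0" using inn by (simp add: a_def ev_def)
        then show ?thesis using y1 hb True by (simp add: xh_eq bnd_def)
      next
        case False
        then have "n \<le> j" using ij inn by simp
        show ?thesis
        proof (cases "j = n")
          case True
          then show ?thesis using y1 inn by (simp add: xh_n ev_def id_mat_def)
        next
          case False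
          then have "Suc n \<le> j" using \<open>n \<le> j\<close> by simp
          then show ?thesis using y1 hb by (simp add: xh_big bnd_def)
        qed
      qed
    qed
  qed
  have yG: "y \<in> GL_inf" using xhG zG by (simp add: y_def GL_mult)
  have yH: "(y, \<lambda>_. 0) \<in> H" by (rule Suc.IH[OF yG yb])
  have xH: "(x, \<lambda>_. 0) \<in> H" using allT afin f da by (simp add: x_def)
  have zH: "(z, \<lambda>_. 0) \<in> H" using allT sfin ds by (simp add: z_def)
  have H3: "(mat_mult (mat_mult x y) z, \<lambda>_. 0) \<in> H"
    by (rule mult_zero_pairs[OF nH mult_zero_pairs[OF nH xH yH] zH])
  have r: "rowfin x" "rowfin h" "rowfin z" "rowfin xh" using xG hG zG xhG by (auto simp: GL_rowfin)
  have "mat_mult x y = mat_mult (mat_mult x xh) z"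
    using r by (simp add: y_def mat_mult_assoc)
  also have "mat_mult x xh = h"
    using r xG by (simp add: xh_def flip: mat_mult_assoc)
  finally have "mat_mult (mat_mult x y) z = mat_mult (mat_mult h z) z" by simp
  also have "\<dots> = h" using r zG by (simp add: mat_mult_assoc)
  finally show ?case using H3 by simp
qed

lemma all_GL_in:
  assumes g: "(g, \<lambda>_. 0) \<in> H" "g \<in> GL_inf" "g \<noteq> id_mat" and h: "h \<in> GL_inf"
  shows "(h, \<lambda>_. 0) \<in> H"
proof -
  obtain u0 m where "u0 \<in> fin_vecs" "u0 \<noteq> (\<lambda>_. 0)" "u0 m = 0" "(tv u0 (ev m), \<lambda>_. 0) \<in> H"
    using get_tv[OF g] by blast
  then have allT: "\<forall>u f. u \<in> fin_vecs \<longrightarrow> f \<in> fin_vecs \<longrightarrow> dot f u = 0 \<longrightarrow> (tv u f, \<lambda>_. 0) \<in> H"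
    using all_tv[OF nH] by blast
  obtain n where "bnd n h" using h GL_fin fin_mats_bnd by blast
  then show ?thesis using gen_GL[OF allT h] by blast
qed

end



lemma transl_normal: "transl_subgroup \<lhd> G_semidirect"
proof -
  have sg: "subgroup transl_subgroup G_semidirect"
  proof (rule G.subgroupI)
    show "transl_subgroup \<subseteq> carrier G_semidirect"
      by (auto simp: transl_subgroup_def)
    have "(id_mat, \<lambda>_. 0) \<in> transl_subgroup" by (simp add: transl_subgroup_def)
    then show "transl_subgroup \<noteq> {}" by blast
  next
    fix a assume "a \<in> transl_subgroup"
    then obtain v where a: "a = (id_mat, v)" "v \<in> fin_vecs" by (auto simp: transl_subgroup_def)
    have "inv\<^bsub>G_semidirect\<^esub> a = a" using a by (intro G.inv_equality) auto
    then show "inv\<^bsub>G_semidirect\<^esub> a \<in> transl_subgroup" using a by simp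
  next
    fix a b assume "a \<in> transl_subgroup" "b \<in> transl_subgroup"
    then show "a \<otimes>\<^bsub>G_semidirect\<^esub> b \<in> transl_subgroup"
      by (auto simp: transl_subgroup_def)
  qed
  have "\<forall>x\<in>carrier G_semidirect. \<forall>h\<in>transl_subgroup.
          x \<otimes>\<^bsub>G_semidirect\<^esub> h \<otimes>\<^bsub>G_semidirect\<^esub> inv\<^bsub>G_semidirect\<^esub> x \<in> transl_subgroup"
  proof (intro ballI)
    fix x h assume x: "x \<in> carrier G_semidirect" and h: "h \<in> transl_subgroup"
    then obtain g u v where xh: "x = (g, u)" "h = (id_mat, v)" "g \<in> GL_inf" "u \<in> fin_vecs" "v \<in> fin_vecs"
      by (auto simp: transl_subgroup_def)
    let ?z = "(id_mat, mat_vec g v)"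
    have zc: "?z \<in> carrier G_semidirect" using xh by (simp add: fin_vecs_mat_vec GL_fin)
    have "x \<otimes>\<^bsub>G_semidirect\<^esub> h = ?z \<otimes>\<^bsub>G_semidirect\<^esub> x" using xh by (simp add: add.commute)
    then have "x \<otimes>\<^bsub>G_semidirect\<^esub> h \<otimes>\<^bsub>G_semidirect\<^esub> inv\<^bsub>G_semidirect\<^esub> x
        = ?z \<otimes>\<^bsub>G_semidirect\<^esub> (x \<otimes>\<^bsub>G_semidirect\<^esub> inv\<^bsub>G_semidirect\<^esub> x)"
      using G.m_assoc[OF zc x G.inv_closed[OF x]] by (simp only:)
    also have "\<dots> = ?z" by (simp only: G.r_inv[OF x] G.r_one[OF zc])
    finally show "x \<otimes>\<^bsub>G_semidirect\<^esub> h \<otimes>\<^bsub>G_semidirect\<^esub> inv\<^bsub>G_semidirect\<^esub> x \<in> transl_subgroup"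
      using xh by (simp add: fin_vecs_mat_vec GL_fin)
  qed
  then show ?thesis using sg G.normal_inv_iff by blast
qed

lemma carrier_normal: "carrier G_semidirect \<lhd> G_semidirect"
  using G.normal_inv_iff G.subgroup_self G.m_closed G.inv_closed by metis

theorem lemma4p2:
  "normal H G_semidirect \<longleftrightarrow>
     H = {\<one>\<^bsub>G_semidirect\<^esub>} \<or> H = transl_subgroup \<or> H = carrier G_semidirect"
proof
  assume nH: "H \<lhd> G_semidirect"
  show "H = {\<one>\<^bsub>G_semidirect\<^esub>} \<or> H = transl_subgroup \<or> H = carrier G_semidirect"
  proof (cases "\<exists>v. (id_mat, v) \<in> H \<and> v \<noteq> (\<lambda>_. 0)")
    case False
    then have "H = {(id_mat, \<lambda>_. 0)}" using H_trivial[OF nH] by blast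
    then show ?thesis by simp
  next
    case True
    then obtain v where v: "(id_mat, v) \<in> H" "v \<noteq> (\<lambda>_. 0)" by blast
    have T: "transl_subgroup \<subseteq> H" by (rule transl_in_H[OF nH v])
    show ?thesis
    proof (cases "H \<subseteq> transl_subgroup")
      case True
      then show ?thesis using T by blast
    next
      case False
      then obtain y where y: "y \<in> H" "y \<notin> transl_subgroup" by blast
      obtain g u where "y = (g, u)" by fastforce
      then have gu: "(g, u) \<in> H" "(g, u) \<notin> transl_subgroup" using y by auto
      have gc: "g \<in> GL_inf" "u \<in> fin_vecs" using H_carr[OF nH gu(1)] by auto
      then have gne: "g \<noteq> id_mat" using gu(2) by auto
      have "(id_mat, u) \<in> H" using T gc by auto
      then have "(id_mat, u) \<otimes>\<^bsub>G_semidirect\<^esub> (g, u) \<in> H" using H_mult[OF nH _ gu(1)] by blast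
      then have g0: "(g, \<lambda>_. 0) \<in> H" by simp
      have "carrier G_semidirect \<subseteq> H"
      proof
        fix x assume "x \<in> carrier G_semidirect"
        then obtain h w where x: "x = (h, w)" "h \<in> GL_inf" "w \<in> fin_vecs" by auto
        have h0: "(h, \<lambda>_. 0) \<in> H" by (rule all_GL_in[OF nH g0 gc(1) gne x(2)])
        have "(id_mat, w) \<in> H" using T x by auto
        then have "(id_mat, w) \<otimes>\<^bsub>G_semidirect\<^esub> (h, \<lambda>_. 0) \<in> H" using H_mult[OF nH _ h0] by blast
        then show "x \<in> H" using x by simp
      qed
      then have "H = carrier G_semidirect" using H_carr[OF nH] by blast
      then show ?thesis by blast
    qed
  qed
next
  assume "H = {\<one>\<^bsub>G_semidirect\<^esub>} \<or> H = transl_subgroup \<or> H = carrier G_semidirect"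
  then show "H \<lhd> G_semidirect"
    using G.one_is_normal transl_normal carrier_normal by blast
qed


end
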